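(* Consider the $q$-composite random key predistribution scheme on $n$ sensors with key pool size $P_n$ and key ring size $K_n$, where $q$ is a fixed positive integer and $q\le K_n\le P_n$. Suppose an adversary captures a uniformly random set of $m=m(n)$ sensors and learns all keys in their key rings, and let $p_{\textnormal{compromised}}$ denote the probability that the secure link between two non-captured sensors is compromised, conditioned on these two sensors sharing at least $q$ keys. If $\frac{P_n}{K_n}=\Omega(n)$, then $p_{\textnormal{compromised}}=o(1)$ whenever $m=o(n)$.
   Context: In the $q$-composite scheme, each sensor independently receives $K_n$ distinct keys chosen uniformly at random among all $K_n$-subsets of a pool of $P_n$ keys; two sensors have a secure link iff their key rings share at least $q$ keys. The secure link between two non-captured sensors is compromised iff every key shared by their key rings belongs to the key ring of at least one captured sensor. Asymptotics are as $n\to\infty$; $x_n=\Omega(y_n)$ means $x_n\ge c\,y_n$ for some constant $c>0$ and all large $n$; $x_n=o(y_n)$ means $x_n/y_n\to 0$. *)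

theory Defs
  imports Complex_Main "HOL-Library.FuncSet" "HOL-Library.Landau_Symbols"
begin

definition key_rings :: "nat \<Rightarrow> nat \<Rightarrow> nat set set" where
  "key_rings P K = {S. S \<subseteq> {..<P} \<and> card S = K}"

text \<open>The uniform distribution on this finite product set is the product of the uniform laws.\<close>
definition qc_space :: "nat \<Rightarrow> nat \<Rightarrow> nat \<Rightarrow> nat \<Rightarrow> ((nat \<Rightarrow> nat set) \<times> nat set) set" where
  "qc_space n P K m =
     {(R, M). R \<in> ({..<n} \<rightarrow>\<^sub>E key_rings P K) \<and> M \<subseteq> {..<n} \<and> card M = m}"

definition secure_link :: "nat \<Rightarrow> (nat \<Rightarrow> nat set) \<Rightarrow> nat \<Rightarrow> nat \<Rightarrow> bool" where
  "secure_link q R i j \<longleftrightarrow> q \<le> card (R i \<inter> R j)"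

definition link_compromised :: "(nat \<Rightarrow> nat set) \<Rightarrow> nat set \<Rightarrow> nat \<Rightarrow> nat \<Rightarrow> bool" where
  "link_compromised R M i j \<longleftrightarrow> R i \<inter> R j \<subseteq> (\<Union>c\<in>M. R c)"

text \<open>Probability that the link between two (by symmetry: sensors 0 and 1) non-captured
  sensors is compromised, conditioned on them being non-captured and sharing \<ge> q keys.\<close>
definition p_compromised :: "nat \<Rightarrow> nat \<Rightarrow> nat \<Rightarrow> nat \<Rightarrow> nat \<Rightarrow> real" where
  "p_compromised n P K q m =
     real (card {(R, M) \<in> qc_space n P K m. 0 \<notin> M \<and> 1 \<notin> M \<and> secure_link q R 0 1
                                            \<and> link_compromised R M 0 1})
   / real (card {(R, M) \<in> qc_space n P K m. 0 \<notin> M \<and> 1 \<notin> M \<and> secure_link q R 0 1})"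

end

theory Submission
  imports Defs
begin

lemma fiber_count:
  assumes "finite X"
    and "\<And>y. y \<in> f ` X \<Longrightarrow> card {x\<in>X. f x = y} = b"
    and "\<And>y. y \<in> f ` X \<Longrightarrow> card {x\<in>X. f x = y \<and> Q x} = a"
  shows "card {x\<in>X. Q x} * b = a * card X"
proof -
  have fX: "finite (f ` X)" using assms(1) by simp
  have "card X = (\<Sum>y\<in>f ` X. card {x\<in>X. f x = y})"
    using sum.group[OF assms(1) fX, of f "\<lambda>_. 1::nat"] by simp
  also have "\<dots> = b * card (f ` X)" using assms(2) by simp
  finally have 1: "card X = b * card (f ` X)" .
  have fin2: "finite {x\<in>X. Q x}" using assms(1) by simp
  have "card {x\<in>X. Q x} = (\<Sum>y\<in>f ` X. card {x\<in>{x\<in>X. Q x}. f x = y})"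
    using sum.group[OF fin2 fX, of f "\<lambda>_. 1::nat"] by (simp add: image_mono)
  also have "\<dots> = (\<Sum>y\<in>f ` X. card {x\<in>X. f x = y \<and> Q x})"
    by (rule sum.cong) (auto intro: arg_cong[where f=card])
  also have "\<dots> = a * card (f ` X)" using assms(3) by simp
  finally have 2: "card {x\<in>X. Q x} = a * card (f ` X)" .
  show ?thesis using 1 2 by simp
qed

lemma key_rings_finite: "finite (key_rings P K)"
  unfolding key_rings_def by (rule finite_subset[of _ "Pow {..<P}"]) auto

lemma card_key_rings: "card (key_rings P K) = P choose K"
  unfolding key_rings_def using n_subsets[of "{..<P}" K] by simp

lemma card_key_rings_mem:
  assumes "k < P" "K \<ge> 1"
  shows "card {S \<in> key_rings P K. k \<in> S} * P = K * card (key_rings P K)"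
proof -
  have eq: "{S \<in> key_rings P K. k \<in> S} = insert k ` {T. T \<subseteq> {..<P} - {k} \<and> card T = K - 1}"
  proof (rule set_eqI, rule iffI)
    fix S assume S: "S \<in> {S \<in> key_rings P K. k \<in> S}"
    hence fS: "finite S" using finite_subset[of S "{..<P}"] unfolding key_rings_def by auto
    have "S = insert k (S - {k})" using S by auto
    moreover have "S - {k} \<in> {T. T \<subseteq> {..<P} - {k} \<and> card T = K - 1}"
      using S fS unfolding key_rings_def by auto
    ultimately show "S \<in> insert k ` {T. T \<subseteq> {..<P} - {k} \<and> card T = K - 1}" by blast
  next
    fix S assume "S \<in> insert k ` {T. T \<subseteq> {..<P} - {k} \<and> card T = K - 1}"
    then obtain T where T: "T \<subseteq> {..<P} - {k}" "card T = K - 1" "S = insert k T" by auto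
    have fT: "finite T" using T(1) finite_subset by blast
    have "card S = K" using T fT assms by (auto simp: card_insert_if)
    thus "S \<in> {S \<in> key_rings P K. k \<in> S}" using T assms unfolding key_rings_def by auto
  qed
  have inj: "inj_on (insert k) {T. T \<subseteq> {..<P} - {k} \<and> card T = K - 1}"
    by (rule inj_onI) (metis Diff_insert_absorb Diff_iff mem_Collect_eq singletonI subset_iff)
  have "card {S \<in> key_rings P K. k \<in> S} = (P - 1) choose (K - 1)"
    unfolding eq card_image[OF inj] using n_subsets[of "{..<P} - {k}" "K - 1"] assms by simp
  moreover obtain p where p: "P = Suc p" using assms by (cases P) auto
  moreover obtain j where j: "K = Suc j" using assms by (cases K) auto
  ultimately show ?thesis unfolding card_key_rings
    using Suc_times_binomial_eq[of p j] by (simp add: mult.commute)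
qed

definition kmin :: "(nat \<Rightarrow> nat set) \<Rightarrow> nat" where "kmin R = Min (R 0 \<inter> R 1)"

lemma Dc_fiber:
  fixes n P K q m c :: nat
  assumes c: "c < n" "c \<noteq> 0" "c \<noteq> 1" and q: "q \<ge> 1" and KP: "1 \<le> K" "K \<le> P"
  defines "X \<equiv> {x \<in> qc_space n P K m. 0 \<notin> snd x \<and> 1 \<notin> snd x \<and> secure_link q (fst x) 0 1 \<and> c \<in> snd x}"
  shows "card {x\<in>X. kmin (fst x) \<in> fst x c} * P = K * card X"
proof -
  define f :: "(nat \<Rightarrow> nat set) \<times> nat set \<Rightarrow> (nat \<Rightarrow> nat set) \<times> nat set"
    where "f = (\<lambda>(R,M). (R(c:=undefined), M))"
  define b where "b = card (key_rings P K)"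
  define a where "a = card {S \<in> key_rings P K. 0 \<in> S}"
  have Ppos: "P > 0" using KP by simp
  have ab: "a * P = K * b" unfolding a_def b_def using card_key_rings_mem[OF Ppos KP(1)] .
  have bpos: "b > 0" unfolding b_def card_key_rings using KP by simp
  have finX: "finite X"
  proof -
    have "qc_space n P K m \<subseteq> ({..<n} \<rightarrow>\<^sub>E key_rings P K) \<times> Pow {..<n}"
      unfolding qc_space_def by auto
    moreover have "finite (({..<n} \<rightarrow>\<^sub>E key_rings P K) \<times> Pow {..<n})"
      using key_rings_finite by (simp add: finite_PiE)
    ultimately have "finite (qc_space n P K m)" by (rule finite_subset)
    thus ?thesis unfolding X_def by simp
  qed
  have fib: "{x\<in>X. f x = f (R, M)} = (\<lambda>S. (R(c:=S), M)) ` key_rings P K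
     \<and> {x\<in>X. f x = f (R, M) \<and> kmin (fst x) \<in> fst x c} = (\<lambda>S. (R(c:=S), M)) ` {S \<in> key_rings P K. kmin R \<in> S}"
    if RM: "(R, M) \<in> X" for R M
  proof -
    have R: "R \<in> {..<n} \<rightarrow>\<^sub>E key_rings P K" and M: "M \<subseteq> {..<n}" "card M = m" "0 \<notin> M" "1 \<notin> M" "c \<in> M"
      and sl: "secure_link q R 0 1"
      using RM unfolding X_def qc_space_def by auto
    have km: "kmin (R(c:=S)) = kmin R" for S using c unfolding kmin_def by simp
    have sl2: "secure_link q (R(c:=S)) 0 1 = secure_link q R 0 1" for S
      using c unfolding secure_link_def by simp
    have upd: "R(c:=S) \<in> {..<n} \<rightarrow>\<^sub>E key_rings P K" if "S \<in> key_rings P K" for S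
      using R that c by (auto simp: PiE_iff extensional_def)
    have bk: "x = (R(c := fst x c), M)" if "x \<in> X" "f x = f (R, M)" for x
    proof -
      obtain R2 M2 where x: "x = (R2, M2)" by (cases x)
      have eqs: "R2(c:=undefined) = R(c:=undefined)" "M2 = M" using that(2) unfolding f_def x by auto
      have "R2 z = R z" if zc: "z \<noteq> c" for z
        using fun_cong[OF eqs(1), of z] zc by simp
      hence "R2 = R(c := R2 c)" by (intro ext) simp
      thus ?thesis using x eqs(2) by simp
    qed
    have inX: "fst x c \<in> key_rings P K" if "x \<in> X" for x
      using that c unfolding X_def qc_space_def by (auto simp: PiE_iff)
    have fwd: "(R(c:=S), M) \<in> X" if "S \<in> key_rings P K" for S
      using upd[OF that] M sl sl2 unfolding X_def qc_space_def by auto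
    have fS: "f (R(c:=S), M) = f (R, M)" for S unfolding f_def by simp
    show ?thesis
    proof (rule conjI; rule set_eqI; rule iffI)
      fix x assume "x \<in> {x\<in>X. f x = f (R, M)}"
      thus "x \<in> (\<lambda>S. (R(c:=S), M)) ` key_rings P K" using bk inX by (metis (mono_tags, lifting) image_eqI mem_Collect_eq)
    next
      fix x assume "x \<in> (\<lambda>S. (R(c:=S), M)) ` key_rings P K"
      thus "x \<in> {x\<in>X. f x = f (R, M)}" using fwd fS by auto
    next
      fix x assume x: "x \<in> {x\<in>X. f x = f (R, M) \<and> kmin (fst x) \<in> fst x c}"
      hence "x = (R(c := fst x c), M)" using bk by auto
      moreover have "kmin R \<in> fst x c" using x km by (metis (mono_tags, lifting) calculation fst_conv mem_Collect_eq)
      ultimately show "x \<in> (\<lambda>S. (R(c:=S), M)) ` {S \<in> key_rings P K. kmin R \<in> S}"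
        using inX x by (metis (mono_tags, lifting) image_eqI mem_Collect_eq)
    next
      fix x assume "x \<in> (\<lambda>S. (R(c:=S), M)) ` {S \<in> key_rings P K. kmin R \<in> S}"
      thus "x \<in> {x\<in>X. f x = f (R, M) \<and> kmin (fst x) \<in> fst x c}" using fwd fS km by auto
    qed
  qed
  have inj: "inj_on (\<lambda>S. (R(c:=S), M)) A" for R M and A :: "nat set set"
  proof (rule inj_onI)
    fix S1 S2 assume "(R(c:=S1), M) = (R(c:=S2), M)"
    hence "(R(c:=S1)) c = (R(c:=S2)) c" by simp
    thus "S1 = S2" by simp
  qed
  have kP: "kmin R < P" if "(R, M) \<in> X" for R M
  proof -
    have R: "R \<in> {..<n} \<rightarrow>\<^sub>E key_rings P K" and sl: "secure_link q R 0 1"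
      using that unfolding X_def qc_space_def by auto
    have "R 0 \<in> key_rings P K" using R c by auto
    hence fin: "finite (R 0 \<inter> R 1)" and sub: "R 0 \<subseteq> {..<P}" unfolding key_rings_def
      using finite_subset by auto
    have "card (R 0 \<inter> R 1) \<ge> 1" using sl q unfolding secure_link_def by simp
    hence "R 0 \<inter> R 1 \<noteq> {}" by auto
    hence "kmin R \<in> R 0 \<inter> R 1" unfolding kmin_def using fin Min_in by blast
    thus ?thesis using sub by auto
  qed
  have ka: "card {S \<in> key_rings P K. kmin R \<in> S} = a" if "(R, M) \<in> X" for R M
  proof -
    have "card {S \<in> key_rings P K. kmin R \<in> S} * P = a * P"
      using card_key_rings_mem[OF kP[OF that] KP(1)] ab unfolding b_def by simp
    thus ?thesis using Ppos by simp
  qed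
  have "card {x\<in>X. kmin (fst x) \<in> fst x c} * b = a * card X"
  proof (rule fiber_count[OF finX, of f])
    fix y assume "y \<in> f ` X"
    then obtain R M where RM: "(R, M) \<in> X" "y = f (R, M)" by auto
    show "card {x \<in> X. f x = y} = b"
      using fib[OF RM(1)] RM(2) card_image[OF inj[of R M "key_rings P K"]] b_def by simp
    show "card {x \<in> X. f x = y \<and> kmin (fst x) \<in> fst x c} = a"
      using fib[OF RM(1)] RM(2) card_image[OF inj[of R M "{S \<in> key_rings P K. kmin R \<in> S}"]] ka[OF RM(1)] by simp
  qed
  hence "card {x\<in>X. kmin (fst x) \<in> fst x c} * b * P = a * card X * P" by simp
  also have "\<dots> = (a * P) * card X" by (simp only: ac_simps)
  also have "\<dots> = K * b * card X" using ab by simp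
  finally have "card {x\<in>X. kmin (fst x) \<in> fst x c} * b * P = K * b * card X" .
  thus ?thesis using bpos by (simp add: mult.commute mult.left_commute)
qed

lemma count_bound:
  fixes n P K q m :: nat
  assumes q: "q \<ge> 1" and KP: "1 \<le> K" "K \<le> P"
  shows "card {(R, M) \<in> qc_space n P K m. 0 \<notin> M \<and> 1 \<notin> M \<and> secure_link q R 0 1
                                            \<and> link_compromised R M 0 1} * P
     \<le> K * m * card {(R, M) \<in> qc_space n P K m. 0 \<notin> M \<and> 1 \<notin> M \<and> secure_link q R 0 1}"
proof -
  define D where "D = {x \<in> qc_space n P K m. 0 \<notin> snd x \<and> 1 \<notin> snd x \<and> secure_link q (fst x) 0 1}"
  define N where "N = {x \<in> D. link_compromised (fst x) (snd x) 0 1}"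
  define C where "C = {..<n} - {0, 1}"
  define X where "X c = {x \<in> qc_space n P K m. 0 \<notin> snd x \<and> 1 \<notin> snd x \<and> secure_link q (fst x) 0 1 \<and> c \<in> snd x}" for c
  define Q where "Q c = {x\<in>X c. kmin (fst x) \<in> fst x c}" for c
  have eqD: "{(R, M) \<in> qc_space n P K m. 0 \<notin> M \<and> 1 \<notin> M \<and> secure_link q R 0 1} = D"
    unfolding D_def by auto
  have eqN: "{(R, M) \<in> qc_space n P K m. 0 \<notin> M \<and> 1 \<notin> M \<and> secure_link q R 0 1
                                            \<and> link_compromised R M 0 1} = N"
    unfolding N_def D_def by auto
  have finQ: "finite (qc_space n P K m)"
  proof -
    have "qc_space n P K m \<subseteq> ({..<n} \<rightarrow>\<^sub>E key_rings P K) \<times> Pow {..<n}"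
      unfolding qc_space_def by auto
    moreover have "finite (({..<n} \<rightarrow>\<^sub>E key_rings P K) \<times> Pow {..<n})"
      using key_rings_finite by (simp add: finite_PiE)
    ultimately show ?thesis by (rule finite_subset)
  qed
  have finD: "finite D" unfolding D_def using finQ by simp
  have finC: "finite C" unfolding C_def by simp
  have sub: "N \<subseteq> (\<Union>c\<in>C. Q c)"
  proof
    fix x assume x: "x \<in> N"
    obtain R M where xRM: "x = (R, M)" by (cases x)
    have sl: "secure_link q R 0 1" and lc: "link_compromised R M 0 1" and M: "M \<subseteq> {..<n}" "0 \<notin> M" "1 \<notin> M"
      using x unfolding xRM N_def D_def qc_space_def by auto
    have c1: "card (R 0 \<inter> R 1) \<ge> 1" using sl q unfolding secure_link_def by simp
    have ne: "R 0 \<inter> R 1 \<noteq> {}" using c1 by (metis card.empty not_one_le_zero)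
    have fi: "finite (R 0 \<inter> R 1)" using c1 by (intro card_ge_0_finite) simp
    have "kmin R \<in> R 0 \<inter> R 1" unfolding kmin_def by (rule Min_in[OF fi ne])
    then obtain c where c: "c \<in> M" "kmin R \<in> R c" using lc unfolding link_compromised_def by blast
    have "c \<in> C" using c(1) M unfolding C_def by blast
    moreover have "x \<in> Q c" using x c unfolding xRM Q_def X_def N_def D_def by auto
    ultimately show "x \<in> (\<Union>c\<in>C. Q c)" by blast
  qed
  have "card N \<le> card (\<Union>c\<in>C. Q c)"
    by (rule card_mono[OF _ sub]) (simp add: finC Q_def X_def finQ)
  also have "\<dots> \<le> (\<Sum>c\<in>C. card (Q c))" by (rule card_UN_le[OF finC])
  finally have "card N * P \<le> (\<Sum>c\<in>C. card (Q c)) * P" by simp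
  also have "\<dots> = (\<Sum>c\<in>C. card (Q c) * P)" by (simp add: sum_distrib_right)
  also have "\<dots> = (\<Sum>c\<in>C. K * card (X c))"
  proof (rule sum.cong[OF refl])
    fix c assume "c \<in> C"
    hence c: "c < n" "c \<noteq> 0" "c \<noteq> 1" unfolding C_def by auto
    show "card (Q c) * P = K * card (X c)" unfolding Q_def X_def
      using Dc_fiber[OF c q KP, of m] by simp
  qed
  also have "\<dots> = K * (\<Sum>c\<in>C. card (X c))" by (simp add: sum_distrib_left)
  also have "(\<Sum>c\<in>C. card (X c)) = m * card D"
  proof -
    have "(\<Sum>c\<in>C. card (X c)) = (\<Sum>c\<in>C. \<Sum>x\<in>D. if c \<in> snd x then 1 else 0)"
    proof (rule sum.cong[OF refl])
      fix c assume "c \<in> C"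
      have "X c = {x\<in>D. c \<in> snd x}" unfolding X_def D_def by auto
      thus "card (X c) = (\<Sum>x\<in>D. if c \<in> snd x then 1 else 0)"
        using sum.inter_filter[OF finD, of "\<lambda>_. 1::nat" "\<lambda>x. c \<in> snd x"] by simp
    qed
    also have "\<dots> = (\<Sum>x\<in>D. \<Sum>c\<in>C. if c \<in> snd x then 1 else 0)" by (rule sum.swap)
    also have "\<dots> = (\<Sum>x\<in>D. m)"
    proof (rule sum.cong[OF refl])
      fix x assume x: "x \<in> D"
      have M: "snd x \<subseteq> C" "card (snd x) = m" using x unfolding D_def qc_space_def C_def by auto
      have "(\<Sum>c\<in>C. if c \<in> snd x then 1 else 0) = card {c\<in>C. c \<in> snd x}"
        using sum.inter_filter[OF finC, of "\<lambda>_. 1::nat" "\<lambda>c. c \<in> snd x"] by simp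
      also have "{c\<in>C. c \<in> snd x} = snd x" using M by auto
      finally show "(\<Sum>c\<in>C. if c \<in> snd x then 1 else 0) = m" using M by simp
    qed
    finally show ?thesis by simp
  qed
  finally show ?thesis unfolding eqD eqN by (simp add: mult.assoc)
qed

lemma ratio_aux:
  fixes Nn Dn P K m :: nat
  assumes "Nn * P \<le> K * m * Dn" "P > 0"
  shows "real Nn / real Dn \<le> real m * real K / real P"
proof (cases "Dn = 0")
  case True thus ?thesis by simp
next
  case False
  hence D: "real Dn > 0" by simp
  have P: "real P > 0" using assms(2) by simp
  have b: "real Nn * real P \<le> real K * real m * real Dn"
    using assms(1) by (metis of_nat_le_iff of_nat_mult)
  have "real Nn \<le> real K * real m * real Dn / real P" using b P by (simp add: le_divide_eq)
  also have "\<dots> = real m * real K / real P * real Dn" by simp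
  finally show ?thesis using D by (simp add: divide_le_eq)
qed

lemma p_bound:
  fixes n P K q m :: nat
  assumes q: "q \<ge> 1" and KP: "1 \<le> K" "K \<le> P"
  shows "0 \<le> p_compromised n P K q m \<and> p_compromised n P K q m \<le> real m * real K / real P"
proof -
  let ?N = "card {(R, M) \<in> qc_space n P K m. 0 \<notin> M \<and> 1 \<notin> M \<and> secure_link q R 0 1
                                            \<and> link_compromised R M 0 1}"
  let ?D = "card {(R, M) \<in> qc_space n P K m. 0 \<notin> M \<and> 1 \<notin> M \<and> secure_link q R 0 1}"
  have "real ?N / real ?D \<le> real m * real K / real P"
    by (rule ratio_aux[OF count_bound[OF q KP, of n m]]) (use KP in simp)
  moreover have "0 \<le> real ?N / real ?D" by (rule divide_nonneg_nonneg) simp_all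
  ultimately show ?thesis unfolding p_compromised_def by blast
qed

theorem corollary1:
  fixes q :: nat and P K m :: "nat \<Rightarrow> nat"
  assumes "q \<ge> 1"
    and "\<And>n. q \<le> K n \<and> K n \<le> P n"
    and "(\<lambda>n. real (P n) / real (K n)) \<in> \<Omega>(\<lambda>n. real n)"
    and "(\<lambda>n. real (m n)) \<in> o(\<lambda>n. real n)"
  shows "(\<lambda>n. p_compromised n (P n) (K n) q (m n)) \<longlonglongrightarrow> 0"
proof -
  have KP: "1 \<le> K n" "K n \<le> P n" for n using assms(1) assms(2)[of n] by auto
  obtain C where C: "C > 0" and evC: "eventually (\<lambda>n. C * norm (real n) \<le> norm (real (P n) / real (K n))) sequentially"
    using landau_omega.bigE[OF assms(3)] by blast
  show ?thesis
  proof (rule LIMSEQ_I)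
    fix r :: real assume r: "r > 0"
    have evm: "eventually (\<lambda>n. norm (real (m n)) \<le> (r * C / 2) * norm (real n)) sequentially"
      using landau_o.smallD[OF assms(4), of "r * C / 2"] r C by simp
    have "eventually (\<lambda>n. norm (p_compromised n (P n) (K n) q (m n) - 0) < r) sequentially"
      using evC evm eventually_gt_at_top[of 0]
    proof eventually_elim
      case (elim n)
      have Kp: "real (K n) > 0" and Pp: "real (P n) > 0" using KP[of n] by auto
      have h1: "C * real n \<le> real (P n) / real (K n)" using elim(1) by simp
      have h2: "real (m n) \<le> (r * C / 2) * real n" using elim(2) by simp
      have n0: "real n > 0" using elim(3) by simp
      have pb: "0 \<le> p_compromised n (P n) (K n) q (m n) \<and> p_compromised n (P n) (K n) q (m n) \<le> real (m n) * real (K n) / real (P n)"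
        using p_bound[OF assms(1) KP] .
      have "real (m n) * real (K n) / real (P n) = real (m n) / (real (P n) / real (K n))"
        by simp
      also have "\<dots> \<le> (r * C / 2) * real n / (C * real n)"
        using h1 h2 C n0 by (intro frac_le) auto
      also have "\<dots> = r / 2" using C n0 by simp
      finally have "real (m n) * real (K n) / real (P n) \<le> r / 2" .
      hence "p_compromised n (P n) (K n) q (m n) < r" using pb r by linarith
      thus ?case using pb by simp
    qed
    thus "\<exists>no. \<forall>n\<ge>no. norm (p_compromised n (P n) (K n) q (m n) - 0) < r"
      by (simp only: eventually_sequentially)
  qed
qed

end
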